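(* Let $R$ be an Artinian ring, with notation as in the context. Let $f_1,f_2\colon[R^n]\to[R^m]$ be $\mathrm{OVIC}(R)$-morphisms, $f_i=(f_i',f_i'')$. Assume that $f_1''=f_2''$ and that the free rows of $\Phi(f_1')$ and of $\Phi(f_2')$ are equal. Then $f_1=f_2$.
   Context: Let $R$ be an Artinian ring, $J(R)$ its Jacobson radical, $\overline R=R/J(R)$, and $\bar x$ (resp. $\bar A$) the image of an element (resp. entrywise image of a matrix). $\overline R\cong \mathrm{Mat}_{\mu_1}(\mathbb D_1)\times\cdots\times\mathrm{Mat}_{\mu_q}(\mathbb D_q)$ with division rings $\mathbb D_k$; put $\mu=\mu_1+\cdots+\mu_q$. Fix orthogonal idempotents $e^k_i\in R$ ($1\le k\le q$, $1\le i\le\mu_k$) with $\sum_{k,i}e^k_i=1$ lifting the orthogonal idempotents $\bar e^k_i$ of $\overline R$ given by the diagonal matrix units of this decomposition (so $e^k_iR\cong e^{k'}_{i'}R$ iff $k=k'$). Let $\mathbb L_{hk}=e^h_1Re^k_1$. The Peirce decomposition $R\cong\mathrm{End}(R_R)=\bigoplus\mathrm{Hom}(e^k_jR,e^h_iR)$, with the isomorphisms $e^h_iR\cong e^h_1R$, gives an injective ring homomorphism (the Artin–Wedderburn embedding) $\Phi\colon R\to\mathrm{Mat}_\mu(R)$, $x\mapsto(\Phi_{hk}(x))_{h,k=1}^q$ a $q\times q$ block matrix with $\Phi_{hk}(x)\in\mathrm{Mat}_{\mu_h,\mu_k}(\mathbb L_{hk})$; its reduction $\overline\Phi\colon\overline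 R\to\mathrm{Mat}_\mu(\overline R)$ sends $\bar x$ to the block-diagonal matrix whose $k$-th block is the $\mathrm{Mat}_{\mu_k}(\mathbb D_k)$-component of $\bar x$. Vectors $R^n$ are columns (right $R$-modules); an $R$-linear $h\colon R^a\to R^b$ is a $b\times a$ matrix, and $\Phi(h)\in\mathrm{Mat}_{\mu b,\mu a}(R)$ is obtained by replacing each entry $x$ by $\Phi(x)$; similarly $\overline\Phi(\bar h)$. Distinguished basis: for $1\le k\le q$, $1\le c\le a$, $1\le r\le\mu_k$, let $\vec v(k)_{(c-1)\mu_k+r}$ be the standard basis vector of $R^{\mu a}$ of index $(c-1)\mu+\mu_1+\cdots+\mu_{k-1}+r$; define $\vec w(k)_i$ in $R^{\mu b}$ the same way, bars denoting images over $\overline R$. For surjective $h\colon R^a\to R^b$ and each $k$, $\mathfrak S(h,k)$ is the smallest, in the lexicographic order on increasingly sorted sequences, subset $S\subset\{1,\dots,\mu_ka\}$ such that $\{\overline\Phi(\bar h)(\overline{\vec v(k)_j}):j\in S\}$ is a basis of the right $\mathbb D_k$-module $\bigoplus_{i=1}^{\mu_kb}\overline{\vec w(k)_i}\cdot\mathbb D_k$. A surjective $h$ is column-adapted if (i) for every $k$, writing $\mathfrak S(h,k)=\{j_1<\cdots<j_{\mu_kb}\}$, $\overline\Phi(\bar h)(\overline{\vec v(k)_{j_i}})=\overline{\vec w(k)_i}$ for all $i$, and (ii) $\Phi(h)(\vec v(k)_{j_i})=\vec w(k)_i$ for all $k,i$. $\mathrm{VIC}(R)$ has objects $[R^n]$,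 $n\ge0$; a morphism $[R^n]\to[R^m]$ is a pair $(f',f'')$ with $f'\colon R^n\to R^m$ injective $R$-linear, $f''\colon R^m\to R^n$ $R$-linear, $f''\circ f'=\mathrm{id}$; composition $(g',g'')\circ(f',f'')=(g'f',f''g'')$. $\mathrm{OVIC}(R)$ is the subcategory with the same objects and morphisms those $(f',f'')$ with $f''$ column-adapted. For an $\mathrm{OVIC}(R)$-morphism $(f',f'')\colon[R^n]\to[R^m]$, the rows of $\Phi(f')\in\mathrm{Mat}_{\mu m,\mu n}(R)$ are indexed by the standard basis of $R^{\mu m}$; the dependent rows are those indexed by $\vec v(k)_j$ (distinguished basis of $R^{\mu m}$) with $j\in\mathfrak S(f'',k)$ for some $k$, and all other rows are the free rows. *)

theory Defs
  imports Main "Jordan_Normal_Form.Matrix"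
begin

definition right_ideal :: "'a::ring_1 set \<Rightarrow> bool" where
  "right_ideal I \<longleftrightarrow> 0 \<in> I \<and> (\<forall>x\<in>I. \<forall>y\<in>I. x + y \<in> I) \<and> (\<forall>x\<in>I. - x \<in> I)
     \<and> (\<forall>x\<in>I. \<forall>r. x * r \<in> I)"

definition right_artinian :: "'a::ring_1 itself \<Rightarrow> bool" where
  "right_artinian _ \<longleftrightarrow>
     (\<forall>C :: nat \<Rightarrow> 'a set. (\<forall>n. right_ideal (C n)) \<and> (\<forall>n. C (Suc n) \<subseteq> C n)
        \<longrightarrow> (\<exists>N. \<forall>n\<ge>N. C n = C N))"

definition maximal_right_ideal :: "'a::ring_1 set \<Rightarrow> bool" where
  "maximal_right_ideal I \<longleftrightarrow> right_ideal I \<and> I \<noteq> UNIV \<and>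
     (\<forall>K. right_ideal K \<and> I \<subseteq> K \<longrightarrow> K = I \<or> K = UNIV)"

definition jac :: "'a::ring_1 set" where
  "jac = \<Inter> {I. maximal_right_ideal I}"

definition congJ :: "'a::ring_1 \<Rightarrow> 'a \<Rightarrow> bool" where
  "congJ x y \<longleftrightarrow> x - y \<in> jac"

text \<open>Data: q, the block sizes mu k (1 <= k <= q), idempotents idem k i, and
  the isomorphisms e^k_i R -> e^k_1 R (left multiplication by iso k i in
  e^k_1 R e^k_i) with inverses (left multiplication by isoinv k i in e^k_i R e^k_1).\<close>
record 'a awdata =
  nq :: nat
  mu :: "nat \<Rightarrow> nat"
  idem :: "nat \<Rightarrow> nat \<Rightarrow> 'a"
  iso :: "nat \<Rightarrow> nat \<Rightarrow> 'a"
  isoinv :: "nat \<Rightarrow> nat \<Rightarrow> 'a"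

definition aw_index_set :: "'a awdata \<Rightarrow> (nat \<times> nat) set" where
  "aw_index_set A = {(k, i). 1 \<le> k \<and> k \<le> nq A \<and> 1 \<le> i \<and> i \<le> mu A k}"

text \<open>The corner ring e R e modulo J is a division ring (e not in J, every
  nonzero element of the corner has a right inverse in the corner, modulo J).\<close>
definition corner_division_modJ :: "'a::ring_1 \<Rightarrow> bool" where
  "corner_division_modJ e \<longleftrightarrow> e \<notin> jac \<and>
     (\<forall>x. e * x * e \<notin> jac \<longrightarrow> (\<exists>y. congJ ((e * x * e) * (e * y * e)) e))"

text \<open>Valid Artin--Wedderburn data for an Artinian ring: orthogonal idempotents
  summing to 1, isomorphisms e^k_i R = e^k_1 R; modulo J the elements
  iso'(k,i) * iso(k,j) form a full system of matrix units with
  R/J = prod_k Mat_{mu_k}(D_k), D_k = e^k_1 (R/J) e^k_1 a division ring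
  (off-diagonal corners e^k_1 R e^l_1, k <> l, vanish modulo J).\<close>
definition aw_valid :: "'a::ring_1 awdata \<Rightarrow> bool" where
  "aw_valid A \<longleftrightarrow>
     (\<forall>k\<in>{1..nq A}. 1 \<le> mu A k) \<and>
     (\<forall>(k,i)\<in>aw_index_set A. idem A k i * idem A k i = idem A k i) \<and>
     (\<forall>(k,i)\<in>aw_index_set A. \<forall>(l,j)\<in>aw_index_set A. (k,i) \<noteq> (l,j) \<longrightarrow> idem A k i * idem A l j = 0) \<and>
     (\<Sum>(k,i)\<in>aw_index_set A. idem A k i) = 1 \<and>
     (\<forall>(k,i)\<in>aw_index_set A.
        iso A k i = idem A k 1 * iso A k i * idem A k i \<and>
        isoinv A k i = idem A k i * isoinv A k i * idem A k 1 \<and>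
        iso A k i * isoinv A k i = idem A k 1 \<and>
        isoinv A k i * iso A k i = idem A k i) \<and>
     (\<forall>k\<in>{1..nq A}. corner_division_modJ (idem A k 1)) \<and>
     (\<forall>k\<in>{1..nq A}. \<forall>l\<in>{1..nq A}. k \<noteq> l \<longrightarrow> (\<forall>x. idem A k 1 * x * idem A l 1 \<in> jac))"

definition aw_off :: "'a awdata \<Rightarrow> nat \<Rightarrow> nat" where
  "aw_off A k = (\<Sum>l\<in>{1..<k}. mu A l)"

definition aw_mu :: "'a awdata \<Rightarrow> nat" where
  "aw_mu A = (\<Sum>l\<in>{1..nq A}. mu A l)"

text \<open>For 0 <= s < mu: block index k and 1-based position r inside the block.\<close>
definition aw_blk :: "'a awdata \<Rightarrow> nat \<Rightarrow> nat" where
  "aw_blk A s = (LEAST k. s < aw_off A (Suc k))"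

definition aw_pos :: "'a awdata \<Rightarrow> nat \<Rightarrow> nat" where
  "aw_pos A s = s - aw_off A (aw_blk A s) + 1"

definition aw_entry :: "'a::ring_1 awdata \<Rightarrow> 'a \<Rightarrow> nat \<Rightarrow> nat \<Rightarrow> 'a" where
  "aw_entry A x s s' =
     iso A (aw_blk A s) (aw_pos A s) * x * isoinv A (aw_blk A s') (aw_pos A s')"

definition aw_Phi :: "'a::ring_1 awdata \<Rightarrow> 'a mat \<Rightarrow> 'a mat" where
  "aw_Phi A h = (let M = aw_mu A in
     mat (M * dim_row h) (M * dim_col h)
       (\<lambda>(p, p'). aw_entry A (h $$ (p div M, p' div M)) (p mod M) (p' mod M)))"

text \<open>0-based index of the distinguished basis vector v(k)_j (j 1-based):
  the standard index (c-1)mu + mu_1+...+mu_(k-1) + r, j = (c-1) mu_k + r.\<close>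
definition aw_vidx :: "'a awdata \<Rightarrow> nat \<Rightarrow> nat \<Rightarrow> nat" where
  "aw_vidx A k j = ((j - 1) div mu A k) * aw_mu A + aw_off A k + (j - 1) mod mu A k"

definition aw_vec :: "'a::ring_1 awdata \<Rightarrow> nat \<Rightarrow> nat \<Rightarrow> nat \<Rightarrow> 'a vec" where
  "aw_vec A a k j = unit_vec (aw_mu A * a) (aw_vidx A k j)"

definition surj_mat :: "'a::ring_1 mat \<Rightarrow> bool" where
  "surj_mat h \<longleftrightarrow> (\<forall>y\<in>carrier_vec (dim_row h). \<exists>x\<in>carrier_vec (dim_col h). h *\<^sub>v x = y)"

text \<open>D_k = e^k_1 (R/J) e^k_1, represented by elements d with d = e d e.\<close>
definition aw_D :: "'a::ring_1 awdata \<Rightarrow> nat \<Rightarrow> 'a set" where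
  "aw_D A k = {d. d = idem A k 1 * d * idem A k 1}"

text \<open>{ bar(Phi(h))(bar v(k)_j) : j in S } is a basis (family indexed by S) of
  the right D_k-module (+)_{i=1}^{mu_k b} bar w(k)_i D_k, all over R/J.\<close>
definition aw_basis :: "'a::ring_1 awdata \<Rightarrow> 'a mat \<Rightarrow> nat \<Rightarrow> nat set \<Rightarrow> bool" where
  "aw_basis A h k S \<longleftrightarrow>
     (let a = dim_col h; b = dim_row h; N = aw_mu A * b;
          col = (\<lambda>j. aw_Phi A h *\<^sub>v aw_vec A a k j);
          comb = (\<lambda>d p. \<Sum>i\<in>{1..mu A k * b}. aw_vec A b k i $ p * d i) in
      (\<forall>j\<in>S. \<exists>d. (\<forall>i. d i \<in> aw_D A k) \<and> (\<forall>p<N. congJ (col j $ p) (comb d p))) \<and>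
      (\<forall>d. (\<forall>i. d i \<in> aw_D A k) \<longrightarrow>
         (\<exists>c. (\<forall>j. c j \<in> aw_D A k) \<and> (\<forall>p<N. congJ (\<Sum>j\<in>S. col j $ p * c j) (comb d p)))) \<and>
      (\<forall>c. (\<forall>j. c j \<in> aw_D A k) \<and> (\<forall>p<N. congJ (\<Sum>j\<in>S. col j $ p * c j) 0)
         \<longrightarrow> (\<forall>j\<in>S. congJ (c j) 0)))"

definition aw_cands :: "'a::ring_1 awdata \<Rightarrow> 'a mat \<Rightarrow> nat \<Rightarrow> nat set set" where
  "aw_cands A h k = {S. S \<subseteq> {1..mu A k * dim_col h} \<and> aw_basis A h k S}"

definition lex_sorted_less :: "nat set \<Rightarrow> nat set \<Rightarrow> bool" where
  "lex_sorted_less S T \<longleftrightarrow>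
     (sorted_list_of_set S, sorted_list_of_set T) \<in> lexord {(x, y). x < y}"

definition is_frakS :: "'a::ring_1 awdata \<Rightarrow> 'a mat \<Rightarrow> nat \<Rightarrow> nat set \<Rightarrow> bool" where
  "is_frakS A h k S \<longleftrightarrow> S \<in> aw_cands A h k \<and>
     (\<forall>T\<in>aw_cands A h k. T \<noteq> S \<longrightarrow> lex_sorted_less S T)"

definition frakS :: "'a::ring_1 awdata \<Rightarrow> 'a mat \<Rightarrow> nat \<Rightarrow> nat set" where
  "frakS A h k = (THE S. is_frakS A h k S)"

definition column_adapted :: "'a::ring_1 awdata \<Rightarrow> 'a mat \<Rightarrow> bool" where
  "column_adapted A h \<longleftrightarrow> surj_mat h \<and>
     (\<forall>k\<in>{1..nq A}. (\<exists>S. is_frakS A h k S) \<and>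
        (\<exists>j. strict_mono_on {1..mu A k * dim_row h} j \<and>
             j ` {1..mu A k * dim_row h} = frakS A h k \<and>
             (\<forall>i\<in>{1..mu A k * dim_row h}.
                (\<forall>p<aw_mu A * dim_row h.
                   congJ ((aw_Phi A h *\<^sub>v aw_vec A (dim_col h) k (j i)) $ p)
                         (aw_vec A (dim_row h) k i $ p)) \<and>
                aw_Phi A h *\<^sub>v aw_vec A (dim_col h) k (j i) = aw_vec A (dim_row h) k i)))"

definition VIC_mor :: "nat \<Rightarrow> nat \<Rightarrow> 'a::ring_1 mat \<times> 'a mat \<Rightarrow> bool" where
  "VIC_mor n m f \<longleftrightarrow> fst f \<in> carrier_mat m n \<and> snd f \<in> carrier_mat n m \<and>
     inj_on (\<lambda>x. fst f *\<^sub>v x) (carrier_vec n) \<and> snd f * fst f = 1\<^sub>m n"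

definition OVIC_mor :: "'a::ring_1 awdata \<Rightarrow> nat \<Rightarrow> nat \<Rightarrow> 'a mat \<times> 'a mat \<Rightarrow> bool" where
  "OVIC_mor A n m f \<longleftrightarrow> VIC_mor n m f \<and> column_adapted A (snd f)"

text \<open>Dependent rows of Phi(f') (0-based indices into R^(mu m)), determined by f''.\<close>
definition dep_rows :: "'a::ring_1 awdata \<Rightarrow> 'a mat \<Rightarrow> nat set" where
  "dep_rows A f2 = (\<Union>k\<in>{1..nq A}. aw_vidx A k ` frakS A f2 k)"

end

theory Submission
  imports Defs
begin

lemma off_mono: "k \<le> k' \<Longrightarrow> aw_off A k \<le> aw_off A k'"
  unfolding aw_off_def by (rule sum_mono2) auto

lemma off_Suc: "1 \<le> k \<Longrightarrow> aw_off A (Suc k) = aw_off A k + mu A k"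
  unfolding aw_off_def by (simp add: atLeastLessThanSuc)

lemma off_1: "aw_off A (Suc 0) = 0"
  unfolding aw_off_def by simp

lemma mu_off: "aw_mu A = aw_off A (Suc (nq A))"
  unfolding aw_off_def aw_mu_def by (simp add: atLeastLessThanSuc_atLeastAtMost)

lemma blk_props:
  assumes "s < aw_mu A"
  shows "1 \<le> aw_blk A s \<and> aw_blk A s \<le> nq A \<and> aw_off A (aw_blk A s) \<le> s \<and>
         s < aw_off A (aw_blk A s) + mu A (aw_blk A s)"
proof -
  let ?P = "\<lambda>k. s < aw_off A (Suc k)"
  have Pq: "?P (nq A)" using assms mu_off by metis
  have le: "aw_blk A s \<le> nq A" unfolding aw_blk_def by (rule Least_le[of ?P, OF Pq])
  have P: "?P (aw_blk A s)" unfolding aw_blk_def by (rule LeastI[of ?P, OF Pq])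
  have ne: "aw_blk A s \<noteq> 0" using P off_1 by (metis less_zeroE)
  have np: "\<not> ?P (aw_blk A s - 1)"
    unfolding aw_blk_def by (rule not_less_Least) (use ne in \<open>simp add: aw_blk_def\<close>)
  have "Suc (aw_blk A s - 1) = aw_blk A s" using ne by simp
  then have "aw_off A (aw_blk A s) \<le> s" using np by (metis not_less)
  moreover have "s < aw_off A (aw_blk A s) + mu A (aw_blk A s)"
    using P off_Suc[of "aw_blk A s" A] ne by simp
  ultimately show ?thesis using le ne by simp
qed

lemma blk_inv:
  assumes "1 \<le> k" "t < mu A k"
  shows "aw_blk A (aw_off A k + t) = k"
  unfolding aw_blk_def
proof (rule Least_equality)
  show "aw_off A k + t < aw_off A (Suc k)" using off_Suc[of k A] assms by simp
next
  fix y assume "aw_off A k + t < aw_off A (Suc y)"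
  then show "k \<le> y"
  proof (rule contrapos_pp)
    assume "\<not> k \<le> y"
    then have "Suc y \<le> k" by simp
    then have "aw_off A (Suc y) \<le> aw_off A k" by (rule off_mono)
    then show "\<not> aw_off A k + t < aw_off A (Suc y)" by simp
  qed
qed

lemma pos_inv:
  assumes "1 \<le> k" "t < mu A k"
  shows "aw_pos A (aw_off A k + t) = t + 1"
  unfolding aw_pos_def blk_inv[OF assms] by simp

lemma off_bound:
  assumes "1 \<le> k" "k \<le> nq A" "t < mu A k"
  shows "aw_off A k + t < aw_mu A"
proof -
  have "aw_off A (Suc k) \<le> aw_off A (Suc (nq A))" using assms by (intro off_mono) simp
  then show ?thesis using off_Suc[of k A] assms mu_off[of A] by simp
qed

lemma sum_blk:
  fixes g :: "nat \<Rightarrow> nat \<Rightarrow> 'b::comm_monoid_add"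
  shows "(\<Sum>s<aw_mu A. g (aw_blk A s) (aw_pos A s)) = (\<Sum>(k,i)\<in>aw_index_set A. g k i)"
proof (rule sum.reindex_bij_witness[where j = "\<lambda>s. (aw_blk A s, aw_pos A s)"
      and i = "\<lambda>(k,i). aw_off A k + i - 1"])
  fix s assume "s \<in> {..<aw_mu A}"
  then have s: "s < aw_mu A" by simp
  note B = blk_props[OF s]
  show "(case (aw_blk A s, aw_pos A s) of (k, i) \<Rightarrow> aw_off A k + i - 1) = s"
    using B unfolding aw_pos_def by simp
  show "(aw_blk A s, aw_pos A s) \<in> aw_index_set A"
    using B unfolding aw_pos_def aw_index_set_def by auto
  show "(case (aw_blk A s, aw_pos A s) of (k, i) \<Rightarrow> g k i) = g (aw_blk A s) (aw_pos A s)" by simp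
next
  fix a assume "a \<in> aw_index_set A"
  then obtain k i where a: "a = (k,i)" "1 \<le> k" "k \<le> nq A" "1 \<le> i" "i \<le> mu A k"
    unfolding aw_index_set_def by auto
  have t: "i - 1 < mu A k" using a by simp
  have e: "aw_off A k + i - 1 = aw_off A k + (i - 1)" using a by simp
  show "(case a of (k, i) \<Rightarrow> aw_off A k + i - 1) \<in> {..<aw_mu A}"
    using off_bound[OF a(2,3) t] a e by simp
  show "(aw_blk A (case a of (k, i) \<Rightarrow> aw_off A k + i - 1),
         aw_pos A (case a of (k, i) \<Rightarrow> aw_off A k + i - 1)) = a"
    using a e blk_inv[OF a(2) t] pos_inv[OF a(2) t] by simp
qed

lemma valid_mu_pos: "aw_valid A \<Longrightarrow> 1 \<le> k \<Longrightarrow> k \<le> nq A \<Longrightarrow> 0 < mu A k"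
  unfolding aw_valid_def by (simp add: Suc_le_eq)

lemma vidx_props:
  assumes v: "aw_valid A" and k: "1 \<le> k" "k \<le> nq A" and i: "1 \<le> i" "i \<le> mu A k * b"
  shows "aw_vidx A k i < aw_mu A * b \<and> aw_vidx A k i div aw_mu A = (i - 1) div mu A k \<and>
         aw_vidx A k i mod aw_mu A = aw_off A k + (i - 1) mod mu A k"
proof -
  have mp: "0 < mu A k" using valid_mu_pos[OF v k] .
  let ?c = "(i - 1) div mu A k" and ?t = "(i - 1) mod mu A k"
  have t: "?t < mu A k" using mp by simp
  have ob: "aw_off A k + ?t < aw_mu A" by (rule off_bound[OF k t])
  have c: "?c < b"
    using i mp by (simp add: less_mult_imp_div_less div_less_iff_less_mult mult.commute)
  have eq: "aw_vidx A k i = ?c * aw_mu A + (aw_off A k + ?t)"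
    unfolding aw_vidx_def by simp
  have "?c * aw_mu A + (aw_off A k + ?t) < ?c * aw_mu A + aw_mu A" using ob by simp
  also have "\<dots> = Suc ?c * aw_mu A" by simp
  also have "\<dots> \<le> b * aw_mu A" using c by (intro mult_le_mono1) simp
  finally have "aw_vidx A k i < aw_mu A * b" using eq by (simp add: mult.commute)
  moreover have "aw_vidx A k i div aw_mu A = ?c" using eq ob by simp
  moreover have "aw_vidx A k i mod aw_mu A = aw_off A k + ?t" using eq ob by simp
  ultimately show ?thesis by blast
qed

lemma vidx_inj:
  assumes v: "aw_valid A" and k: "1 \<le> k" "k \<le> nq A" and i: "1 \<le> i" "i \<le> mu A k * b"
    and k': "1 \<le> k'" "k' \<le> nq A" and i': "1 \<le> i'" "i' \<le> mu A k' * b"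
    and e: "aw_vidx A k i = aw_vidx A k' i'"
  shows "k = k' \<and> i = i'"
proof -
  note P = vidx_props[OF v k i] and P' = vidx_props[OF v k' i']
  have mp: "0 < mu A k" using valid_mu_pos[OF v k] .
  have mp': "0 < mu A k'" using valid_mu_pos[OF v k'] .
  have m: "aw_off A k + (i - 1) mod mu A k = aw_off A k' + (i' - 1) mod mu A k'"
    using P P' e by metis
  have "aw_blk A (aw_off A k + (i - 1) mod mu A k) = k" using blk_inv[OF k(1), of "(i - 1) mod mu A k" A] mp by simp
  moreover have "aw_blk A (aw_off A k' + (i' - 1) mod mu A k') = k'" using blk_inv[OF k'(1), of "(i' - 1) mod mu A k'" A] mp' by simp
  ultimately have kk: "k = k'" using m by simp
  have d: "(i - 1) div mu A k = (i' - 1) div mu A k" using P P' e kk by metis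
  have md: "(i - 1) mod mu A k = (i' - 1) mod mu A k" using m kk by simp
  have "i - 1 = i' - 1" using d md by (metis div_mult_mod_eq)
  then show ?thesis using kk i i' by simp
qed

lemma in_idx: "s < aw_mu A \<Longrightarrow> (aw_blk A s, aw_pos A s) \<in> aw_index_set A"
  using blk_props[of s A] unfolding aw_pos_def aw_index_set_def by auto

lemma sum_iso:
  assumes v: "aw_valid A"
  shows "(\<Sum>s<aw_mu A. isoinv A (aw_blk A s) (aw_pos A s) * iso A (aw_blk A s) (aw_pos A s)) = 1"
proof -
  have "(\<Sum>s<aw_mu A. isoinv A (aw_blk A s) (aw_pos A s) * iso A (aw_blk A s) (aw_pos A s))
     = (\<Sum>(k,i)\<in>aw_index_set A. isoinv A k i * iso A k i)" by (rule sum_blk)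
  also have "\<dots> = (\<Sum>(k,i)\<in>aw_index_set A. idem A k i)"
    using v unfolding aw_valid_def by (intro sum.cong) auto
  also have "\<dots> = 1" using v unfolding aw_valid_def by blast
  finally show ?thesis .
qed

lemma split_sum:
  fixes g :: "nat \<Rightarrow> 'b::comm_monoid_add"
  shows "(\<Sum>p<M*a. g p) = (\<Sum>l<a. \<Sum>s<M. g (l*M+s))"
proof -
  have "(\<Sum>p<M*a. g p) = (\<Sum>l<a. sum g {l*M..<l*M+M})"
    using sum.nat_group[of g M a] by (simp add: mult.commute)
  also have "\<dots> = (\<Sum>l<a. \<Sum>s<M. g (l*M+s))"
  proof (rule sum.cong[OF refl])
    fix l
    have "{l*M..<l*M+M} = (\<lambda>s. l*M+s) ` {..<M}"
      using image_add_atLeastLessThan[of "l*M" 0 M] by (simp add: add.commute lessThan_atLeast0)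
    then show "sum g {l*M..<l*M+M} = (\<Sum>s<M. g (l*M+s))"
      by (simp add: sum.reindex inj_on_def)
  qed
  finally show ?thesis .
qed

lemma Phi_dims[simp]:
  "dim_row (aw_Phi A h) = aw_mu A * dim_row h" "dim_col (aw_Phi A h) = aw_mu A * dim_col h"
  unfolding aw_Phi_def Let_def by simp_all

lemma Phi_index:
  "p < aw_mu A * dim_row h \<Longrightarrow> p' < aw_mu A * dim_col h \<Longrightarrow>
   aw_Phi A h $$ (p,p') = aw_entry A (h $$ (p div aw_mu A, p' div aw_mu A)) (p mod aw_mu A) (p' mod aw_mu A)"
  unfolding aw_Phi_def Let_def by simp

lemma Phi_mult:
  assumes v: "aw_valid A" and h: "h \<in> carrier_mat b a" and F: "F \<in> carrier_mat a c"
  shows "aw_Phi A h * aw_Phi A F = aw_Phi A (h * F)"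
proof (rule eq_matI)
  fix r c' assume r: "r < dim_row (aw_Phi A (h * F))" and c': "c' < dim_col (aw_Phi A (h * F))"
  let ?M = "aw_mu A"
  have rM: "r < ?M * b" and cM: "c' < ?M * c" using r c' h F by auto
  define x where "x = r div ?M"
  define y where "y = c' div ?M"
  define I where "I = iso A (aw_blk A (r mod ?M)) (aw_pos A (r mod ?M))"
  define J where "J = isoinv A (aw_blk A (c' mod ?M)) (aw_pos A (c' mod ?M))"
  define Ii where "Ii = (\<lambda>s. isoinv A (aw_blk A s) (aw_pos A s))"
  define Is where "Is = (\<lambda>s. iso A (aw_blk A s) (aw_pos A s))"
  have "(aw_Phi A h * aw_Phi A F) $$ (r, c') = (\<Sum>p<?M*a. aw_Phi A h $$ (r,p) * aw_Phi A F $$ (p,c'))"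
    using rM cM h F by (simp add: scalar_prod_def lessThan_atLeast0)
  also have "\<dots> = (\<Sum>l<a. \<Sum>s<?M. aw_Phi A h $$ (r,l*?M+s) * aw_Phi A F $$ (l*?M+s,c'))"
    by (rule split_sum)
  also have "\<dots> = (\<Sum>l<a. \<Sum>s<?M. I * h $$ (x,l) * (Ii s * Is s) * F $$ (l,y) * J)"
  proof (intro sum.cong refl)
    fix l s assume l: "l \<in> {..<a}" and s: "s \<in> {..<?M}"
    have lt: "l*?M+s < ?M * a"
    proof -
      have "l*?M+s < l*?M + ?M" using s by simp
      also have "\<dots> = Suc l * ?M" by simp
      also have "\<dots> \<le> a * ?M" using l by (intro mult_le_mono1) simp
      finally show ?thesis by (simp add: mult.commute)
    qed
    have d: "(l*?M+s) div ?M = l" "(l*?M+s) mod ?M = s" using s by auto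
    show "aw_Phi A h $$ (r,l*?M+s) * aw_Phi A F $$ (l*?M+s,c') = I * h $$ (x,l) * (Ii s * Is s) * F $$ (l,y) * J"
      using rM cM lt h F d
      by (simp add: Phi_index aw_entry_def x_def y_def I_def J_def Ii_def Is_def mult.assoc)
  qed
  also have "\<dots> = (\<Sum>l<a. I * h $$ (x,l) * (\<Sum>s<?M. Ii s * Is s) * F $$ (l,y) * J)"
    by (simp add: sum_distrib_left sum_distrib_right)
  also have "\<dots> = (\<Sum>l<a. I * h $$ (x,l) * F $$ (l,y) * J)"
    using sum_iso[OF v] by (simp add: Ii_def Is_def)
  also have "\<dots> = I * (\<Sum>l<a. h $$ (x,l) * F $$ (l,y)) * J"
    by (simp add: sum_distrib_left sum_distrib_right mult.assoc)
  also have "\<dots> = aw_Phi A (h * F) $$ (r, c')"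
  proof -
    have x: "x < b" using rM by (simp add: x_def less_mult_imp_div_less mult.commute)
    have y: "y < c" using cM by (simp add: y_def less_mult_imp_div_less mult.commute)
    have "(h * F) $$ (x,y) = (\<Sum>l<a. h $$ (x,l) * F $$ (l,y))"
      using x y h F by (simp add: scalar_prod_def lessThan_atLeast0)
    then show ?thesis using rM cM h F
      by (simp add: Phi_index aw_entry_def x_def y_def I_def J_def mult.assoc)
  qed
  finally show "(aw_Phi A h * aw_Phi A F) $$ (r, c') = aw_Phi A (h * F) $$ (r, c')" .
qed (use h F in auto)

lemma lt_block: "l < a \<Longrightarrow> s < (M::nat) \<Longrightarrow> l*M+s < M*a"
proof -
  assume l: "l < a" and s: "s < M"
  have "l*M+s < l*M + M" using s by simp
  also have "\<dots> = Suc l * M" by simp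
  also have "\<dots> \<le> a * M" using l by (intro mult_le_mono1) simp
  finally show ?thesis by (simp add: mult.commute)
qed

lemma Phi_recover:
  assumes v: "aw_valid A" and x: "x < dim_row F" and y: "y < dim_col F"
  shows "F $$ (x,y) = (\<Sum>s<aw_mu A. \<Sum>s'<aw_mu A.
      isoinv A (aw_blk A s) (aw_pos A s) * aw_Phi A F $$ (x*aw_mu A+s, y*aw_mu A+s') *
      iso A (aw_blk A s') (aw_pos A s'))"
proof -
  let ?M = "aw_mu A"
  define Ii where "Ii = (\<lambda>s. isoinv A (aw_blk A s) (aw_pos A s))"
  define Is where "Is = (\<lambda>s. iso A (aw_blk A s) (aw_pos A s))"
  have S: "(\<Sum>s<?M. Ii s * Is s) = 1" using sum_iso[OF v] by (simp add: Ii_def Is_def)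
  have "(\<Sum>s<?M. \<Sum>s'<?M. Ii s * aw_Phi A F $$ (x*?M+s, y*?M+s') * Is s')
      = (\<Sum>s<?M. \<Sum>s'<?M. (Ii s * Is s) * F $$ (x,y) * (Ii s' * Is s'))"
  proof (intro sum.cong refl)
    fix s s' assume s: "s \<in> {..<?M}" and s': "s' \<in> {..<?M}"
    have d: "(x*?M+s) div ?M = x" "(x*?M+s) mod ?M = s" "(y*?M+s') div ?M = y" "(y*?M+s') mod ?M = s'"
      using s s' by auto
    show "Ii s * aw_Phi A F $$ (x*?M+s, y*?M+s') * Is s' = (Ii s * Is s) * F $$ (x,y) * (Ii s' * Is s')"
      using lt_block[OF x, of s ?M] lt_block[OF y, of s' ?M] s s' d
      by (simp add: Phi_index aw_entry_def Ii_def Is_def mult.assoc)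
  qed
  also have "\<dots> = (\<Sum>s<?M. (Ii s * Is s) * F $$ (x,y) * (\<Sum>s'<?M. Ii s' * Is s'))"
    by (simp add: sum_distrib_left)
  also have "\<dots> = (\<Sum>s<?M. Ii s * Is s) * F $$ (x,y) * (\<Sum>s'<?M. Ii s' * Is s')"
    by (simp add: sum_distrib_right)
  also have "\<dots> = F $$ (x,y)" using S by simp
  finally show ?thesis by (simp add: Ii_def Is_def)
qed

lemma Phi_col:
  assumes p: "p < aw_mu A * dim_col h" and r: "r < aw_mu A * dim_row h"
  shows "(aw_Phi A h *\<^sub>v unit_vec (aw_mu A * dim_col h) p) $ r = aw_Phi A h $$ (r,p)"
proof -
  have "(aw_Phi A h *\<^sub>v unit_vec (aw_mu A * dim_col h) p) $ r
     = (\<Sum>t\<in>{0..<aw_mu A * dim_col h}. aw_Phi A h $$ (r,t) * (if t = p then 1 else 0))"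
    using p r by (simp add: scalar_prod_def)
  also have "\<dots> = aw_Phi A h $$ (r,p)"
    using p by (simp add: if_distrib cong: if_cong)
  finally show ?thesis .
qed

theorem lemma4p6:
  fixes A :: "'a::ring_1 awdata" and n m :: nat and f1 f2 :: "'a mat \<times> 'a mat"
  assumes "right_artinian TYPE('a)"
    and "aw_valid A"
    and "OVIC_mor A n m f1" and "OVIC_mor A n m f2"
    and "snd f1 = snd f2"
    and "\<forall>p < aw_mu A * m. p \<notin> dep_rows A (snd f1) \<longrightarrow>
           (\<forall>c < aw_mu A * n. aw_Phi A (fst f1) $$ (p, c) = aw_Phi A (fst f2) $$ (p, c))"
  shows "f1 = f2"
proof -
  note v = assms(2)
  let ?M = "aw_mu A"
  define h where "h = snd f1"
  define F1 where "F1 = fst f1"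
  define F2 where "F2 = fst f2"
  have F1c: "F1 \<in> carrier_mat m n" and hc: "h \<in> carrier_mat n m" and hF1: "h * F1 = 1\<^sub>m n"
    using assms(3) unfolding OVIC_mor_def VIC_mor_def F1_def h_def by auto
  have F2c: "F2 \<in> carrier_mat m n" and hF2: "h * F2 = 1\<^sub>m n"
    using assms(4,5) unfolding OVIC_mor_def VIC_mor_def F2_def h_def by auto
  have ca: "column_adapted A h" using assms(3) unfolding OVIC_mor_def h_def by simp
  have PhiEq: "aw_Phi A h * aw_Phi A F1 = aw_Phi A h * aw_Phi A F2"
    using Phi_mult[OF v hc F1c] Phi_mult[OF v hc F2c] hF1 hF2 by simp
  have hdims: "dim_row h = n" "dim_col h = m" using hc by auto
  have "\<forall>k\<in>{1..nq A}. \<exists>j. j ` {1..mu A k * n} = frakS A h k \<and>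
          (\<forall>i\<in>{1..mu A k * n}. aw_Phi A h *\<^sub>v aw_vec A m k (j i) = aw_vec A n k i)"
    using ca unfolding column_adapted_def hdims by metis
  then obtain J where J: "\<And>k. k\<in>{1..nq A} \<Longrightarrow> J k ` {1..mu A k * n} = frakS A h k \<and>
          (\<forall>i\<in>{1..mu A k * n}. aw_Phi A h *\<^sub>v aw_vec A m k (J k i) = aw_vec A n k i)"
    by metis
  have colJ: "aw_Phi A h $$ (r, aw_vidx A k (J k i)) = (if r = aw_vidx A k i then 1 else 0)"
    if k: "1 \<le> k" "k \<le> nq A" and i: "1 \<le> i" "i \<le> mu A k * n"
      and r: "r < ?M * n" and p: "aw_vidx A k (J k i) < ?M * m" for k i r
  proof -
    have "aw_Phi A h $$ (r, aw_vidx A k (J k i)) = (aw_Phi A h *\<^sub>v aw_vec A m k (J k i)) $ r"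
      using Phi_col[of "aw_vidx A k (J k i)" A h r] p r hdims by (simp add: aw_vec_def)
    also have "\<dots> = aw_vec A n k i $ r" using J[of k] k i by auto
    also have "\<dots> = (if r = aw_vidx A k i then 1 else 0)"
      using vidx_props[OF v k i] r by (simp add: aw_vec_def)
    finally show ?thesis .
  qed
  have dep: "\<exists>k i. 1 \<le> k \<and> k \<le> nq A \<and> 1 \<le> i \<and> i \<le> mu A k * n \<and> p = aw_vidx A k (J k i)"
    if "p \<in> dep_rows A h" for p
  proof -
    from that obtain k where k: "k \<in> {1..nq A}" and pk: "p \<in> aw_vidx A k ` frakS A h k"
      unfolding dep_rows_def by auto
    from pk obtain q where q: "q \<in> frakS A h k" "p = aw_vidx A k q" by auto
    from q(1) obtain i where "i \<in> {1..mu A k * n}" "q = J k i" using J[OF k] by (metis imageE)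
    then have "i \<in> {1..mu A k * n}" "p = aw_vidx A k (J k i)" using q by auto
    then show ?thesis using k by auto
  qed
  have PE: "aw_Phi A F1 $$ (p,c) = aw_Phi A F2 $$ (p,c)" if p: "p < ?M * m" and c: "c < ?M * n" for p c
  proof (cases "p \<in> dep_rows A h")
    case False
    then show ?thesis using assms(6) p c unfolding h_def F1_def F2_def by blast
  next
    case True
    then obtain k i where k: "1 \<le> k" "k \<le> nq A" and i: "1 \<le> i" "i \<le> mu A k * n"
      and pe: "p = aw_vidx A k (J k i)" using dep by blast
    define r where "r = aw_vidx A k i"
    have r: "r < ?M * n" using vidx_props[OF v k i] r_def by simp
    define D where "D = (\<lambda>p'. aw_Phi A F1 $$ (p',c) - aw_Phi A F2 $$ (p',c))"
    have "(aw_Phi A h * aw_Phi A F1) $$ (r,c) = (aw_Phi A h * aw_Phi A F2) $$ (r,c)"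
      using PhiEq by simp
    then have "(\<Sum>p'\<in>{0..<?M*m}. aw_Phi A h $$ (r,p') * aw_Phi A F1 $$ (p',c))
             = (\<Sum>p'\<in>{0..<?M*m}. aw_Phi A h $$ (r,p') * aw_Phi A F2 $$ (p',c))"
      using r c hc F1c F2c by (simp add: scalar_prod_def)
    then have S0: "(\<Sum>p'\<in>{0..<?M*m}. aw_Phi A h $$ (r,p') * D p') = 0"
      by (simp add: D_def right_diff_distrib sum_subtractf)
    have Z: "aw_Phi A h $$ (r,p') * D p' = 0" if p': "p' \<in> {0..<?M*m} - {p}" for p'
    proof (cases "p' \<in> dep_rows A h")
      case False
      then have "D p' = 0" using assms(6) p' c unfolding D_def h_def F1_def F2_def by auto
      then show ?thesis by simp
    next
      case True
      then obtain k' i' where k': "1 \<le> k'" "k' \<le> nq A" and i': "1 \<le> i'" "i' \<le> mu A k' * n"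
        and pe': "p' = aw_vidx A k' (J k' i')" using dep by blast
      have "r \<noteq> aw_vidx A k' i'"
      proof
        assume "r = aw_vidx A k' i'"
        then have "k = k' \<and> i = i'" using vidx_inj[OF v k i k' i'] r_def by simp
        then show False using p' pe pe' by simp
      qed
      then show ?thesis using colJ[OF k' i' r] p' pe' by simp
    qed
    have "(\<Sum>p'\<in>{0..<?M*m}. aw_Phi A h $$ (r,p') * D p')
        = aw_Phi A h $$ (r,p) * D p + (\<Sum>p'\<in>{0..<?M*m} - {p}. aw_Phi A h $$ (r,p') * D p')"
      using p by (intro sum.remove) auto
    also have "\<dots> = aw_Phi A h $$ (r,p) * D p" using Z by simp
    also have "\<dots> = D p" using colJ[OF k i r] p pe r_def by simp
    finally have "D p = 0" using S0 by simp
    then show ?thesis by (simp add: D_def)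
  qed
  have "F1 = F2"
  proof (rule eq_matI)
    fix x y assume x: "x < dim_row F2" and y: "y < dim_col F2"
    have x': "x < dim_row F1" "x < m" and y': "y < dim_col F1" "y < n" using x y F1c F2c by auto
    show "F1 $$ (x,y) = F2 $$ (x,y)"
      unfolding Phi_recover[OF v x y] Phi_recover[OF v x'(1) y'(1)]
      using PE lt_block[OF x'(2)] lt_block[OF y'(2)] by (intro sum.cong refl) auto
  qed (use F1c F2c in auto)
  then show ?thesis using assms(5) unfolding F1_def F2_def by (simp add: prod_eq_iff)
qed

end
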